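(* If $I\subseteq\Bbbk[x_0,\dots,x_n]$ is a saturated Borel ideal and $I'$ is any expansion of $I$, then $P_{I'}=1+P_I$.
   Context: $\Bbbk$ is an algebraically closed field; $P_J$ denotes the Hilbert polynomial of $\Bbbk[x_0,\dots,x_n]/J$. A monomial ideal $I$ is Borel if for every monomial $m\in I$, every $x_j\mid m$ and every $i<j$, $mx_i/x_j\in I$; it is saturated if $(I:\langle x_0,\dots,x_n\rangle^\infty)=I$. For a monomial $g$, $\max g$ is the largest $j$ with $x_j\mid g$. A minimal monomial generator $g$ of a saturated Borel ideal $I$ is expandable if the set $\{gx_{i+1}/x_i: x_i\mid g,\ 0\le i<n-1\}$ contains no minimal monomial generator of $I$; the expansion of $I$ at $g$ is the ideal $I'$ generated by all monomials of $I$ not divisible by $g$ together with the monomials $gx_j$ for $\max g\le j\le n-1$. (The generator $1$ of the unit ideal is vacuously expandable, with expansion $\langle x_0,\dots,x_{n-1}\rangle$.) *)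

theory Defs
  imports Main "HOL-Computational_Algebra.Polynomial"
begin

text \<open>Monomials of k[x_0,...,x_n] are exponent vectors a :: nat => nat with a i = 0 for i > n.
  Monomial ideals are represented by their sets of monomials.\<close>

definition monomials :: "nat \<Rightarrow> (nat \<Rightarrow> nat) set" where
  "monomials n = {a. \<forall>i>n. a i = 0}"

definition mdeg :: "nat \<Rightarrow> (nat \<Rightarrow> nat) \<Rightarrow> nat" where
  "mdeg n a = (\<Sum>i\<le>n. a i)"

definition var :: "nat \<Rightarrow> (nat \<Rightarrow> nat)" where
  "var i = (\<lambda>j. if j = i then 1 else 0)"

definition mdvd :: "(nat \<Rightarrow> nat) \<Rightarrow> (nat \<Rightarrow> nat) \<Rightarrow> bool" where
  "mdvd a b \<longleftrightarrow> (\<forall>i. a i \<le> b i)"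

definition monomial_ideal :: "nat \<Rightarrow> (nat \<Rightarrow> nat) set \<Rightarrow> bool" where
  "monomial_ideal n I \<longleftrightarrow> I \<subseteq> monomials n \<and>
     (\<forall>a\<in>I. \<forall>b\<in>monomials n. (\<lambda>i. a i + b i) \<in> I)"

definition mgen :: "nat \<Rightarrow> (nat \<Rightarrow> nat) set \<Rightarrow> (nat \<Rightarrow> nat) set" where
  "mgen n S = {a \<in> monomials n. \<exists>s\<in>S. mdvd s a}"

definition min_gens :: "(nat \<Rightarrow> nat) set \<Rightarrow> (nat \<Rightarrow> nat) set" where
  "min_gens I = {g \<in> I. \<forall>h\<in>I. mdvd h g \<longrightarrow> h = g}"

definition borel :: "nat \<Rightarrow> (nat \<Rightarrow> nat) set \<Rightarrow> bool" where
  "borel n I \<longleftrightarrow> (\<forall>m\<in>I. \<forall>j\<le>n. \<forall>i<j. 0 < m j \<longrightarrow> (\<lambda>k. m k - var j k + var i k) \<in> I)"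

text \<open>(I : <x_0,...,x_n>^\<infinity>) = I, tested on monomials (the saturation of a monomial ideal
  is monomial): f lies in the saturation iff f * <x_0..x_n>^k \<subseteq> I for some k.\<close>
definition saturated :: "nat \<Rightarrow> (nat \<Rightarrow> nat) set \<Rightarrow> bool" where
  "saturated n I \<longleftrightarrow> (\<forall>f\<in>monomials n.
      (\<exists>k. \<forall>u\<in>monomials n. mdeg n u = k \<longrightarrow> (\<lambda>i. f i + u i) \<in> I) \<longrightarrow> f \<in> I)"

text \<open>max g: largest j with x_j dividing g (0 for g = 1, matching the unit-ideal convention)\<close>
definition maxvar :: "nat \<Rightarrow> (nat \<Rightarrow> nat) \<Rightarrow> nat" where
  "maxvar n g = Max ({j. j \<le> n \<and> 0 < g j} \<union> {0})"

definition expandable :: "nat \<Rightarrow> (nat \<Rightarrow> nat) set \<Rightarrow> (nat \<Rightarrow> nat) \<Rightarrow> bool" where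
  "expandable n I g \<longleftrightarrow> g \<in> min_gens I \<and>
     (\<forall>i. 0 < g i \<and> i + 1 < n \<longrightarrow> (\<lambda>k. g k - var i k + var (i + 1) k) \<notin> min_gens I)"

definition expansion :: "nat \<Rightarrow> (nat \<Rightarrow> nat) set \<Rightarrow> (nat \<Rightarrow> nat) \<Rightarrow> (nat \<Rightarrow> nat) set" where
  "expansion n I g = mgen n ({m \<in> I. \<not> mdvd g m} \<union> {(\<lambda>k. g k + var j k) | j. maxvar n g \<le> j \<and> j < n})"

text \<open>Hilbert function of S/I for a monomial ideal I: the standard monomials of degree d
  form a k-basis of (S/I)_d.\<close>
definition hilbert_fun :: "nat \<Rightarrow> (nat \<Rightarrow> nat) set \<Rightarrow> nat \<Rightarrow> nat" where
  "hilbert_fun n I d = card {a \<in> monomials n. mdeg n a = d \<and> a \<notin> I}"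

definition hilbert_poly :: "nat \<Rightarrow> (nat \<Rightarrow> nat) set \<Rightarrow> rat poly" where
  "hilbert_poly n I = (THE p. \<forall>\<^sub>F d in sequentially. poly p (of_nat d) = of_nat (hilbert_fun n I d))"

end

theory Submission
  imports Defs
begin


lemma nat_incsub:
  fixes s :: "nat \<Rightarrow> nat"
  shows "\<exists>r::nat\<Rightarrow>nat. strict_mono r \<and> (\<forall>a b. (a::nat) \<le> b \<longrightarrow> s (r a) \<le> s (r b))"
proof -
  obtain f where f: "strict_mono f" "monoseq (\<lambda>n. s (f n))" using seq_monosub by blast
  show ?thesis
  proof (cases "\<forall>m. \<forall>n\<ge>m. s (f m) \<le> s (f n)")
    case True then show ?thesis using f by blast
  next
    case False
    then have dec: "\<forall>m. \<forall>n\<ge>m. s (f n) \<le> s (f m)" using f(2) unfolding monoseq_def by blast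
    define v where "v = (LEAST v. v \<in> range (\<lambda>n. s (f n)))"
    have "v \<in> range (\<lambda>n. s (f n))" unfolding v_def by (rule LeastI) auto
    then obtain N where N: "s (f N) = v" by auto
    have mn: "\<And>m. v \<le> s (f m)" unfolding v_def by (rule Least_le) auto
    have c: "s (f (m + N)) = v" for m
    proof -
      have "s (f (m + N)) \<le> s (f N)" using dec by simp
      then show ?thesis using mn[of "m+N"] N by simp
    qed
    have "strict_mono (\<lambda>m. f (m + N))" using f(1) unfolding strict_mono_def by simp
    then show ?thesis using c by (intro exI[of _ "\<lambda>m. f (m + N)"]) auto
  qed
qed

lemma vec_incsub:
  fixes s :: "nat \<Rightarrow> nat \<Rightarrow> nat"
  shows "\<exists>r::nat\<Rightarrow>nat. strict_mono r \<and> (\<forall>i<k. \<forall>a b. (a::nat) \<le> b \<longrightarrow> s (r a) i \<le> s (r b) i)"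
proof (induction k)
  case 0
  show ?case by (rule exI[of _ id]) (simp add: strict_mono_def)
next
  case (Suc k)
  then obtain r :: "nat \<Rightarrow> nat" where r: "strict_mono r" "\<forall>i<k. \<forall>a b. (a::nat) \<le> b \<longrightarrow> s (r a) i \<le> s (r b) i" by blast
  obtain r2 :: "nat \<Rightarrow> nat" where r2: "strict_mono r2" "\<forall>a b. (a::nat) \<le> b \<longrightarrow> s (r (r2 a)) k \<le> s (r (r2 b)) k"
    using nat_incsub[of "\<lambda>m. s (r m) k"] by blast
  have "strict_mono (r \<circ> r2)"
    by (rule strict_monoI) (simp add: strict_monoD[OF r(1)] strict_monoD[OF r2(1)])
  moreover have "\<forall>i<Suc k. \<forall>a b. (a::nat) \<le> b \<longrightarrow> s ((r \<circ> r2) a) i \<le> s ((r \<circ> r2) b) i"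
  proof (intro allI impI)
    fix i a b :: nat assume "i < Suc k" "a \<le> b"
    have le: "r2 a \<le> r2 b" using r2(1) \<open>a \<le> b\<close> by (simp add: strict_mono_less_eq)
    show "s ((r \<circ> r2) a) i \<le> s ((r \<circ> r2) b) i"
    proof (cases "i = k")
      case True then show ?thesis using r2(2)[rule_format, OF \<open>a \<le> b\<close>] by simp
    next
      case False then have "i < k" using \<open>i < Suc k\<close> by simp
      then show ?thesis using r(2)[rule_format, OF _ le] by simp
    qed
  qed
  ultimately show ?case by blast
qed

lemma good_seq:
  fixes s :: "nat \<Rightarrow> nat \<Rightarrow> nat"
  assumes "\<And>m. s m \<in> monomials n"
  shows "\<exists>i j. i < j \<and> mdvd (s i) (s j)"
proof -
  obtain r :: "nat \<Rightarrow> nat" where r: "strict_mono r" "\<forall>i<Suc n. \<forall>a b. (a::nat) \<le> b \<longrightarrow> s (r a) i \<le> s (r b) i"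
    using vec_incsub by blast
  have "mdvd (s (r 0)) (s (r 1))" unfolding mdvd_def
  proof
    fix i show "s (r 0) i \<le> s (r 1) i"
    proof (cases "i \<le> n")
      case True then show ?thesis using r(2) by auto
    next
      case False then show ?thesis using assms[of "r 0"] by (simp add: monomials_def)
    qed
  qed
  moreover have "r 0 < r 1" using r(1) by (simp add: strict_mono_def)
  ultimately show ?thesis by blast
qed

lemma dickson:
  assumes "S \<subseteq> monomials n"
  shows "\<exists>F. finite F \<and> F \<subseteq> S \<and> (\<forall>a\<in>S. \<exists>f\<in>F. mdvd f a)"
proof (rule ccontr)
  assume H: "\<not> ?thesis"
  define nxt where "nxt F = (SOME a. a \<in> S \<and> (\<forall>f\<in>F. \<not> mdvd f a))" for F
  have nxt: "nxt F \<in> S \<and> (\<forall>f\<in>F. \<not> mdvd f (nxt F))" if "finite F" "F \<subseteq> S" for F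
  proof -
    have "\<not> (\<forall>a\<in>S. \<exists>f\<in>F. mdvd f a)" using H that by blast
    then have "\<exists>a. a \<in> S \<and> (\<forall>f\<in>F. \<not> mdvd f a)" by blast
    then show ?thesis unfolding nxt_def by (rule someI_ex)
  qed
  define s where "s = rec_nat {} (\<lambda>k F. insert (nxt F) F)"
  have s0: "s 0 = {}" and sS: "s (Suc k) = insert (nxt (s k)) (s k)" for k unfolding s_def by simp_all
  have fs: "finite (s k) \<and> s k \<subseteq> S" for k
  proof (induction k)
    case 0 then show ?case by (simp add: s0)
  next
    case (Suc k)
    then have "nxt (s k) \<in> S" using nxt by blast
    then show ?case using Suc by (simp add: sS)
  qed
  have mem: "j < k \<Longrightarrow> nxt (s j) \<in> s k" for j k
  proof (induction k)
    case 0 then show ?case by simp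
  next
    case (Suc k) then show ?case by (auto simp: sS less_Suc_eq)
  qed
  define t where "t m = nxt (s m)" for m
  have tm: "t m \<in> monomials n" for m
  proof -
    have "t m \<in> S" unfolding t_def using nxt fs by blast
    then show ?thesis using assms by blast
  qed
  obtain i j where ij: "i < j" "mdvd (t i) (t j)" using good_seq[of t n, OF tm] by blast
  have "t i \<in> s j" unfolding t_def using mem[OF ij(1)] .
  moreover have "\<forall>f\<in>s j. \<not> mdvd f (t j)" unfolding t_def using nxt fs by blast
  ultimately show False using ij by blast
qed



definition Dg :: "nat \<Rightarrow> nat \<Rightarrow> (nat \<Rightarrow> nat) set" where
  "Dg n d = {a \<in> monomials n. mdeg n a = d}"

definition EP :: "(nat \<Rightarrow> rat) \<Rightarrow> bool" where
  "EP f \<longleftrightarrow> (\<exists>p. \<forall>\<^sub>F d in sequentially. poly p (of_nat d) = f d)"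

lemma finite_Dg: "finite (Dg n d)"
proof -
  have "Dg n d \<subseteq> {f. \<forall>x. (x \<in> {..n} \<longrightarrow> f x \<in> {..d}) \<and> (x \<notin> {..n} \<longrightarrow> f x = 0)}"
  proof
    fix a assume a: "a \<in> Dg n d"
    have "a x \<le> d" if "x \<le> n" for x
    proof -
      have "a x \<le> (\<Sum>i\<le>n. a i)" using that by (intro member_le_sum) auto
      then show ?thesis using a by (simp add: Dg_def mdeg_def)
    qed
    then show "a \<in> {f. \<forall>x. (x \<in> {..n} \<longrightarrow> f x \<in> {..d}) \<and> (x \<notin> {..n} \<longrightarrow> f x = 0)}"
      using a by (auto simp: Dg_def monomials_def)
  qed
  moreover have "finite {f. \<forall>x. (x \<in> {..n} \<longrightarrow> f x \<in> {..d}) \<and> (x \<notin> {..n} \<longrightarrow> (f::nat\<Rightarrow>nat) x = 0)}"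
    by (rule finite_set_of_finite_funs) auto
  ultimately show ?thesis by (rule finite_subset)
qed

lemma Dg_0: "Dg 0 d = {(\<lambda>i. if i = 0 then d else 0)}"
proof -
  have "a = (\<lambda>i. if i = 0 then d else 0)" if "a \<in> Dg 0 d" for a
    using that by (auto simp: Dg_def monomials_def mdeg_def)
  then show ?thesis by (auto simp: Dg_def monomials_def mdeg_def)
qed

lemma Dg_Suc: "Dg (Suc n) d = (\<Union>k\<in>{..d}. (\<lambda>b. b(Suc n := k)) ` Dg n (d - k))"
proof (intro equalityI subsetI)
  fix a assume a: "a \<in> Dg (Suc n) d"
  define k where "k = a (Suc n)"
  define b where "b = a(Suc n := 0)"
  have "mdeg (Suc n) a = mdeg n b + k" unfolding mdeg_def b_def k_def by simp
  then have "k \<le> d" "mdeg n b = d - k" using a by (auto simp: Dg_def)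
  moreover have "b \<in> monomials n" using a by (auto simp: Dg_def monomials_def b_def)
  moreover have "a = b(Suc n := k)" unfolding b_def k_def by auto
  ultimately show "a \<in> (\<Union>k\<in>{..d}. (\<lambda>b. b(Suc n := k)) ` Dg n (d - k))" by (auto simp: Dg_def)
next
  fix a assume "a \<in> (\<Union>k\<in>{..d}. (\<lambda>b. b(Suc n := k)) ` Dg n (d - k))"
  then obtain k b where kb: "k \<le> d" "b \<in> Dg n (d - k)" "a = b(Suc n := k)" by auto
  have bS: "b (Suc n) = 0" using kb(2) by (simp add: Dg_def monomials_def)
  have "mdeg (Suc n) a = mdeg n b + k" using kb(3) bS unfolding mdeg_def by simp
  then show "a \<in> Dg (Suc n) d" using kb by (auto simp: Dg_def monomials_def)
qed

lemma choose_swap: "(k + n) choose n = (n + k) choose k"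
  using binomial_symmetric[of k "k+n"] by (simp add: add.commute)

lemma card_Dg: "card (Dg n d) = (d + n) choose n"
proof (induction n arbitrary: d)
  case 0
  then show ?case by (simp add: Dg_0)
next
  case (Suc n)
  have inj: "inj_on (\<lambda>b. b(Suc n := k)) (Dg n (d - k))" for k
  proof (rule inj_onI)
    fix x y assume "x \<in> Dg n (d - k)" "y \<in> Dg n (d - k)" "x(Suc n := k) = y(Suc n := k)"
    then show "x = y" by (auto simp: Dg_def monomials_def fun_eq_iff) (metis lessI)
  qed
  have "card (Dg (Suc n) d) = (\<Sum>k\<le>d. card ((\<lambda>b. b(Suc n := k)) ` Dg n (d - k)))"
    unfolding Dg_Suc
    apply (rule card_UN_disjoint)
      apply (auto simp: finite_Dg)
    by (metis fun_upd_same)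
  also have "\<dots> = (\<Sum>k\<le>d. (d - k + n) choose n)"
    using Suc.IH by (simp add: card_image[OF inj])
  also have "\<dots> = (\<Sum>k\<le>d. (k + n) choose n)"
    by (rule sum.reindex_bij_witness[where i="\<lambda>i. d - i" and j="\<lambda>i. d - i"]) auto
  also have "\<dots> = (\<Sum>k\<le>d. (n + k) choose k)"
    using choose_swap by simp
  also have "\<dots> = Suc (n + d) choose d" by (rule sum_choose_lower)
  also have "\<dots> = (d + Suc n) choose Suc n"
    using binomial_symmetric[of d "Suc (n + d)"] by (simp add: add.commute)
  finally show ?case .
qed

lemma EP_binom: "EP (\<lambda>d. of_nat ((d + n) choose n))"
proof -
  define P :: "rat poly" where "P = smult (1 / fact n) (\<Prod>i<n. [:of_nat i + 1, 1:])"
  have "poly P (of_nat d) = of_nat ((d + n) choose n)" for d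
  proof -
    have "(of_nat ((d + n) choose n) :: rat) = (of_nat (d + n) gchoose n)" by (rule binomial_gbinomial)
    also have "\<dots> = pochhammer (of_nat d + 1) n / fact n" by (simp add: gbinomial_pochhammer')
    also have "\<dots> = (\<Prod>i<n. of_nat d + 1 + of_nat i) / fact n"
      by (simp add: pochhammer_prod atLeast0LessThan)
    also have "\<dots> = poly P (of_nat d)"
      by (simp add: P_def poly_prod algebra_simps)
    finally show ?thesis by simp
  qed
  then show ?thesis unfolding EP_def by (intro exI[of _ P]) simp
qed

lemma EP_diff: "EP f \<Longrightarrow> EP g \<Longrightarrow> EP (\<lambda>d. f d - g d)"
proof -
  assume "EP f" "EP g"
  then obtain p q where "\<forall>\<^sub>F d in sequentially. poly p (of_nat d) = f d"
     "\<forall>\<^sub>F d in sequentially. poly q (of_nat d) = g d" unfolding EP_def by blast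
  then have "\<forall>\<^sub>F d in sequentially. poly (p - q) (of_nat d) = f d - g d"
    by eventually_elim simp
  then show ?thesis unfolding EP_def by blast
qed

lemma EP_cong:
  assumes "EP f" "\<forall>\<^sub>F d in sequentially. f d = g d" shows "EP g"
proof -
  obtain p where "\<forall>\<^sub>F d in sequentially. poly p (of_nat d) = f d" using assms(1) unfolding EP_def by blast
  with assms(2) have "\<forall>\<^sub>F d in sequentially. poly p (of_nat d) = g d" by eventually_elim simp
  then show ?thesis unfolding EP_def by blast
qed

lemma EP_shift: "EP f \<Longrightarrow> EP (\<lambda>d. f (d - c))"
proof -
  assume "EP f"
  then obtain p where "\<forall>\<^sub>F d in sequentially. poly p (of_nat d) = f d" unfolding EP_def by blast
  then obtain N where pN: "\<And>d. d \<ge> N \<Longrightarrow> poly p (of_nat d) = f d"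
    unfolding eventually_sequentially by blast
  have "poly (pcompose p [:- of_nat c, 1:]) (of_nat d) = f (d - c)" if "d \<ge> N + c" for d
  proof -
    have "(of_nat (d - c) :: rat) = of_nat d - of_nat c" using that by (simp add: of_nat_diff)
    then have "poly (pcompose p [:- of_nat c, 1:]) (of_nat d) = poly p (of_nat (d - c))"
      by (simp add: poly_pcompose)
    moreover have "d - c \<ge> N" using that by simp
    ultimately show ?thesis using pN[of "d - c"] by simp
  qed
  then have "\<forall>\<^sub>F d in sequentially. poly (pcompose p [:- of_nat c, 1:]) (of_nat d) = f (d - c)"
    unfolding eventually_sequentially by blast
  then show ?thesis unfolding EP_def by blast
qed



lemma mdeg_add: "mdeg n (\<lambda>i. a i + b i) = mdeg n a + mdeg n b"
  unfolding mdeg_def by (simp add: sum.distrib)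

lemma hf_Dg: "hilbert_fun n U d = card {a \<in> Dg n d. a \<notin> U}"
  unfolding hilbert_fun_def Dg_def by (rule arg_cong[where f=card]) auto

lemma finite_compl: "finite {a \<in> Dg n d. P a}"
  using finite_Dg by (rule finite_subset[rotated]) auto

lemma mgen_empty: "mgen n {} = {}" unfolding mgen_def by simp

lemma EP_mgen:
  assumes "finite F" "F \<subseteq> monomials n"
  shows "EP (\<lambda>d. of_nat (hilbert_fun n (mgen n F) d))"
  using assms
proof (induction "card F" arbitrary: F rule: less_induct)
  case less
  show ?case
  proof (cases "F = {}")
    case True
    then show ?thesis
      using EP_binom[of n] by (simp add: mgen_empty hf_Dg card_Dg)
  next
    case False
    then obtain f where fF: "f \<in> F" by blast
    define F0 where "F0 = F - {f}"
    define F' where "F' = (\<lambda>h. \<lambda>i. max (h i) (f i) - f i) ` F0"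
    have fm: "f \<in> monomials n" using fF less.prems by blast
    have cF0: "card F0 < card F" unfolding F0_def using less.prems(1) fF by (rule card_Diff1_less)
    have cF': "card F' \<le> card F0" unfolding F'_def by (rule card_image_le) (simp add: F0_def less.prems(1))
    have F0m: "F0 \<subseteq> monomials n" "finite F0" using less.prems by (auto simp: F0_def)
    have F'm: "F' \<subseteq> monomials n" "finite F'" using F0m by (auto simp: F'_def monomials_def)
    have IH0: "EP (\<lambda>d. of_nat (hilbert_fun n (mgen n F0) d))"
      using less.hyps[OF cF0 F0m(2) F0m(1)] .
    have IH': "EP (\<lambda>d. of_nat (hilbert_fun n (mgen n F') d))"
      using less.hyps[OF _ F'm(2) F'm(1)] cF' cF0 by simp
    have key: "(of_nat (hilbert_fun n (mgen n F) d) :: rat) =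
       of_nat (hilbert_fun n (mgen n F0) d) - of_nat (hilbert_fun n (mgen n F') (d - mdeg n f))"
      if dge: "d \<ge> mdeg n f" for d
    proof -
      define C0 where "C0 = {a \<in> Dg n d. a \<notin> mgen n F0}"
      define C where "C = {a \<in> Dg n d. a \<notin> mgen n F}"
      define M where "M = {a \<in> C0. mdvd f a}"
      have mgF: "a \<in> mgen n F \<longleftrightarrow> a \<in> mgen n F0 \<or> mdvd f a" if "a \<in> monomials n" for a
        using that fF unfolding mgen_def F0_def by auto
      have C0eq: "C0 = C \<union> M" and disj: "C \<inter> M = {}"
        unfolding C0_def C_def M_def using mgF by (auto simp: Dg_def)
      have fin: "finite C" "finite M" unfolding C_def M_def C0_def
        using finite_compl by (auto intro: finite_subset[OF _ finite_compl])
      have cardC0: "card C0 = card C + card M" unfolding C0eq using fin disj by (simp add: card_Un_disjoint)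
      define E where "E = {u \<in> Dg n (d - mdeg n f). u \<notin> mgen n F'}"
      have shift: "(\<lambda>i. f i + u i) \<in> mgen n F0 \<longleftrightarrow> u \<in> mgen n F'" if "u \<in> monomials n" for u
      proof -
        have "(\<lambda>i. f i + u i) \<in> monomials n" using that fm by (simp add: monomials_def)
        moreover have "mdvd h (\<lambda>i. f i + u i) \<longleftrightarrow> mdvd (\<lambda>i. max (h i) (f i) - f i) u" for h
          unfolding mdvd_def by (auto; metis add_diff_cancel_left' diff_le_mono max.bounded_iff max_def le_add1 le_diff_conv add.commute)
        ultimately show ?thesis using that unfolding mgen_def F'_def by auto
      qed
      have Meq: "M = (\<lambda>u. \<lambda>i. f i + u i) ` E"
      proof (intro equalityI subsetI)
        fix a assume a: "a \<in> M"
        define u where "u = (\<lambda>i. a i - f i)"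
        have fa: "mdvd f a" using a by (simp add: M_def)
        have au: "a = (\<lambda>i. f i + u i)" using fa by (auto simp: u_def mdvd_def fun_eq_iff)
        have am: "a \<in> monomials n" "mdeg n a = d" using a by (auto simp: M_def C0_def Dg_def)
        have um: "u \<in> monomials n" using am by (simp add: monomials_def u_def)
        have "mdeg n a = mdeg n f + mdeg n u" using au mdeg_add by metis
        then have "mdeg n u = d - mdeg n f" using am by simp
        moreover have "u \<notin> mgen n F'" using shift[OF um] au a by (simp add: M_def C0_def)
        ultimately have "u \<in> E" using um by (simp add: E_def Dg_def)
        then show "a \<in> (\<lambda>u. \<lambda>i. f i + u i) ` E" using au by blast
      next
        fix a assume "a \<in> (\<lambda>u. \<lambda>i. f i + u i) ` E"
        then obtain u where u: "u \<in> E" "a = (\<lambda>i. f i + u i)" by blast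
        have um: "u \<in> monomials n" "mdeg n u = d - mdeg n f" using u by (auto simp: E_def Dg_def)
        have "a \<in> monomials n" using um fm u(2) by (simp add: monomials_def)
        moreover have "mdeg n a = d" using u(2) mdeg_add[of n f u] um dge by simp
        moreover have "a \<notin> mgen n F0" using shift[OF um(1)] u by (simp add: E_def)
        moreover have "mdvd f a" using u(2) by (simp add: mdvd_def)
        ultimately show "a \<in> M" by (simp add: M_def C0_def Dg_def)
      qed
      have "inj_on (\<lambda>u. \<lambda>i. f i + u i) E"
        by (rule inj_onI) (simp add: fun_eq_iff)
      then have "card M = card E" unfolding Meq by (rule card_image)
      then have "card C0 = card C + card E" using cardC0 by simp
      moreover have "hilbert_fun n (mgen n F) d = card C" by (simp add: hf_Dg C_def)
      moreover have "hilbert_fun n (mgen n F0) d = card C0" by (simp add: hf_Dg C0_def)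
      moreover have "hilbert_fun n (mgen n F') (d - mdeg n f) = card E" by (simp add: hf_Dg E_def)
      ultimately show ?thesis by simp
    qed
    have "EP (\<lambda>d. of_nat (hilbert_fun n (mgen n F0) d) - of_nat (hilbert_fun n (mgen n F') (d - mdeg n f)))"
      by (rule EP_diff[OF IH0 EP_shift[OF IH']])
    moreover have "\<forall>\<^sub>F d in sequentially. of_nat (hilbert_fun n (mgen n F0) d) - of_nat (hilbert_fun n (mgen n F') (d - mdeg n f))
        = (of_nat (hilbert_fun n (mgen n F) d) :: rat)"
      unfolding eventually_sequentially using key by (intro exI[of _ "mdeg n f"]) simp
    ultimately show ?thesis by (rule EP_cong)
  qed
qed



lemma poly_unique:
  fixes p q :: "rat poly"
  assumes "\<forall>\<^sub>F d in sequentially. poly p (of_nat d) = f d"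
      and "\<forall>\<^sub>F d in sequentially. poly q (of_nat d) = f d"
  shows "p = q"
proof (rule ccontr)
  assume ne: "p \<noteq> q"
  from assms have "\<forall>\<^sub>F d in sequentially. poly (p - q) (of_nat d) = 0" by eventually_elim simp
  then obtain N where N: "\<And>d. d \<ge> N \<Longrightarrow> poly (p - q) (of_nat d) = 0"
    unfolding eventually_sequentially by blast
  have "p - q \<noteq> 0" using ne by simp
  then have fin: "finite {x. poly (p - q) x = 0}" by (rule poly_roots_finite)
  have "(of_nat :: nat \<Rightarrow> rat) ` {N..} \<subseteq> {x. poly (p - q) x = 0}" using N by auto
  then have "finite ((of_nat :: nat \<Rightarrow> rat) ` {N..})" using fin by (rule finite_subset)
  moreover have "inj_on (of_nat :: nat \<Rightarrow> rat) {N..}" by (simp add: inj_on_def)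
  ultimately have "finite {N..}" using finite_imageD by blast
  then show False using infinite_Ici by blast
qed

lemma hilbert_poly_eq:
  fixes p :: "rat poly"
  assumes "\<forall>\<^sub>F d in sequentially. poly p (of_nat d) = of_nat (hilbert_fun n I d)"
  shows "hilbert_poly n I = p"
  unfolding hilbert_poly_def
proof (rule the_equality)
  show "\<forall>\<^sub>F d in sequentially. poly p (of_nat d) = of_nat (hilbert_fun n I d)" by (rule assms)
next
  fix q :: "rat poly" assume "\<forall>\<^sub>F d in sequentially. poly q (of_nat d) = of_nat (hilbert_fun n I d)"
  then show "q = p" using assms by (rule poly_unique)
qed

lemma ideal_dvd:
  assumes "monomial_ideal n I" "f \<in> I" "a \<in> monomials n" "mdvd f a"
  shows "a \<in> I"
proof -
  have cl: "\<forall>a\<in>I. \<forall>b\<in>monomials n. (\<lambda>i. a i + b i) \<in> I" using assms(1) by (simp add: monomial_ideal_def)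
  have "(\<lambda>i. a i - f i) \<in> monomials n" using assms(3) by (simp add: monomials_def)
  then have "(\<lambda>i. f i + (a i - f i)) \<in> I" using cl[rule_format, OF assms(2)] by blast
  moreover have "(\<lambda>i. f i + (a i - f i)) = a" using assms(4) by (auto simp: mdvd_def fun_eq_iff)
  ultimately show ?thesis by simp
qed

lemma ideal_mgen:
  assumes "monomial_ideal n I"
  shows "\<exists>F. finite F \<and> F \<subseteq> monomials n \<and> I = mgen n F"
proof -
  have Im: "I \<subseteq> monomials n" using assms by (simp add: monomial_ideal_def)
  obtain F where F: "finite F" "F \<subseteq> I" "\<forall>a\<in>I. \<exists>f\<in>F. mdvd f a"
    using dickson[OF Im] by blast
  have "mgen n F \<subseteq> I"
  proof
    fix a assume "a \<in> mgen n F"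
    then obtain f where f: "f \<in> F" "mdvd f a" "a \<in> monomials n" by (auto simp: mgen_def)
    show "a \<in> I" using ideal_dvd[OF assms _ f(3) f(2)] f(1) F(2) by blast
  qed
  moreover have "I \<subseteq> mgen n F" using F Im by (auto simp: mgen_def)
  ultimately have "I = mgen n F" by (rule equalityI[rotated])
  then show ?thesis using F(1) F(2) Im by (intro exI[of _ F]) blast
qed

lemma EP_ideal:
  assumes "monomial_ideal n I"
  shows "\<exists>p::rat poly. \<forall>\<^sub>F d in sequentially. poly p (of_nat d) = of_nat (hilbert_fun n I d)"
proof -
  obtain F where "finite F" "F \<subseteq> monomials n" "I = mgen n F" using ideal_mgen[OF assms] by blast
  then have "EP (\<lambda>d. of_nat (hilbert_fun n I d))" using EP_mgen[of F n] by simp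
  then show ?thesis unfolding EP_def .
qed



lemma maxvar_le: "maxvar n g \<le> n"
  and maxvar_ge: "j \<le> n \<Longrightarrow> 0 < g j \<Longrightarrow> j \<le> maxvar n g"
  and maxvar_pos: "0 < maxvar n g \<Longrightarrow> 0 < g (maxvar n g)"
proof -
  define S where "S = {j. j \<le> n \<and> 0 < g j} \<union> {0}"
  have fin: "finite S" unfolding S_def by (rule finite_subset[of _ "{..n}"]) auto
  have ne: "S \<noteq> {}" unfolding S_def by blast
  have mx: "maxvar n g = Max S" unfolding maxvar_def S_def ..
  have "Max S \<in> S" using fin ne by (rule Max_in)
  then show "maxvar n g \<le> n" unfolding mx S_def by auto
  show "j \<le> n \<Longrightarrow> 0 < g j \<Longrightarrow> j \<le> maxvar n g" unfolding mx using fin by (intro Max_ge) (auto simp: S_def)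
  show "0 < maxvar n g \<Longrightarrow> 0 < g (maxvar n g)" using \<open>Max S \<in> S\<close> unfolding mx S_def by auto
qed

lemma mdeg_var: "i \<le> n \<Longrightarrow> mdeg n (\<lambda>k. c * var i k) = c"
  unfolding mdeg_def var_def by (simp add: if_distrib sum.delta cong: if_cong)

lemma var_mono: "i \<le> n \<Longrightarrow> var i \<in> monomials n"
  unfolding var_def monomials_def by auto

lemma sat_strip:
  assumes mi: "monomial_ideal n I" and bo: "borel n I" and sa: "saturated n I" and h: "h \<in> I"
  shows "h(n := 0) \<in> I"
proof -
  have Im: "I \<subseteq> monomials n" using mi by (simp add: monomial_ideal_def)
  have claim: "t \<le> h n \<Longrightarrow> u \<in> monomials n \<Longrightarrow> mdeg n u = t \<Longrightarrow> (\<lambda>k. (h(n := h n - t)) k + u k) \<in> I" for t u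
  proof (induction t arbitrary: u)
    case 0
    then have "u = (\<lambda>k. 0)"
      by (auto simp: mdeg_def monomials_def fun_eq_iff) (metis atMost_iff not_le)
    then show ?case using h by simp
  next
    case (Suc t)
    have "\<exists>i\<le>n. 0 < u i"
    proof (rule ccontr)
      assume "\<not> ?thesis"
      then have "mdeg n u = 0" unfolding mdeg_def by simp
      then show False using Suc.prems by simp
    qed
    then obtain i where i: "i \<le> n" "0 < u i" by blast
    define u' where "u' = u(i := u i - 1)"
    have uu: "u = (\<lambda>k. u' k + 1 * var i k)" using i by (auto simp: u'_def var_def fun_eq_iff)
    have u'm: "u' \<in> monomials n" using Suc.prems(2) by (auto simp: u'_def monomials_def)
    have mv: "mdeg n (var i) = 1" using mdeg_var[OF i(1), of 1] by simp
    have "mdeg n u = mdeg n u' + 1" using mdeg_add[of n u' "var i"] mv uu by simp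
    then have du': "mdeg n u' = t" using Suc.prems by simp
    define m' where "m' = (\<lambda>k. (h(n := h n - t)) k + u' k)"
    have m'I: "m' \<in> I" unfolding m'_def using Suc.IH[OF _ u'm du'] Suc.prems by simp
    show ?case
    proof (cases "i = n")
      case True
      have "(\<lambda>k. (h(n := h n - Suc t)) k + u k) = m'"
        using Suc.prems(1) True i(2) by (auto simp: m'_def u'_def fun_eq_iff)
      then show ?thesis using m'I by simp
    next
      case False
      then have iln: "i < n" using i by simp
      have "0 < m' n" unfolding m'_def using Suc.prems(1) by simp
      then have "(\<lambda>k. m' k - var n k + var i k) \<in> I"
        using bo m'I iln unfolding borel_def by blast
      moreover have "(\<lambda>k. m' k - var n k + var i k) = (\<lambda>k. (h(n := h n - Suc t)) k + u k)"
        using Suc.prems(1) False i(2) by (auto simp: m'_def u'_def var_def fun_eq_iff)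
      ultimately show ?thesis by simp
    qed
  qed
  have hm: "h \<in> monomials n" using h Im by blast
  have "h(n := 0) \<in> monomials n" using hm by (simp add: monomials_def)
  moreover have "\<forall>u\<in>monomials n. mdeg n u = h n \<longrightarrow> (\<lambda>i. (h(n := 0)) i + u i) \<in> I"
    using claim[of "h n"] by simp
  ultimately show ?thesis using sa unfolding saturated_def by blast
qed



lemma main_count:
  assumes mi: "monomial_ideal n I" and bo: "borel n I" and sa: "saturated n I"
    and gmin: "g \<in> min_gens I" and dge: "d \<ge> mdeg n g"
  shows "hilbert_fun n (expansion n I g) d = hilbert_fun n I d + 1"
proof -
  define G where "G = {m \<in> I. \<not> mdvd g m} \<union> {(\<lambda>k. g k + var j k) | j. maxvar n g \<le> j \<and> j < n}"
  define I' where "I' = mgen n G"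
  have I'def: "expansion n I g = I'" unfolding I'_def G_def expansion_def ..
  have Im: "I \<subseteq> monomials n" using mi by (simp add: monomial_ideal_def)
  have gI: "g \<in> I" and gmin2: "\<And>h. h \<in> I \<Longrightarrow> mdvd h g \<Longrightarrow> h = g" using gmin by (auto simp: min_gens_def)
  have gm: "g \<in> monomials n" using gI Im by blast
  have cl: "\<forall>a\<in>I. \<forall>b\<in>monomials n. (\<lambda>i. a i + b i) \<in> I" using mi by (simp add: monomial_ideal_def)
  have gvI: "(\<lambda>k. g k + var j k) \<in> I" if "j < n" for j
    using cl[rule_format, OF gI var_mono[of j n]] that by simp
  have GI: "G \<subseteq> I" unfolding G_def using gvI by auto
  have I'I: "I' \<subseteq> I"
  proof
    fix a assume "a \<in> I'"
    then obtain s where "s \<in> G" "mdvd s a" "a \<in> monomials n" by (auto simp: I'_def mgen_def)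
    then show "a \<in> I" using ideal_dvd[OF mi] GI by blast
  qed
  define k where "k = d - mdeg n g"
  define a0 where "a0 = (\<lambda>i. g i + k * var n i)"
  have a0m: "a0 \<in> monomials n" using gm by (auto simp: a0_def monomials_def var_def)
  have a0d: "mdeg n a0 = d" unfolding a0_def using mdeg_add[of n g "\<lambda>i. k * var n i"] mdeg_var[of n n k] dge k_def by simp
  have a0I: "a0 \<in> I" unfolding a0_def using cl[rule_format, OF gI, of "\<lambda>i. k * var n i"] by (simp add: monomials_def var_def)
  have a0nI': "a0 \<notin> I'"
  proof
    assume "a0 \<in> I'"
    then obtain s where s: "s \<in> G" "mdvd s a0" by (auto simp: I'_def mgen_def)
    show False
    proof (cases "s \<in> {m \<in> I. \<not> mdvd g m}")
      case True
      have sI: "s \<in> I" "\<not> mdvd g s" using True by auto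
      have h'I: "s(n := 0) \<in> I" by (rule sat_strip[OF mi bo sa sI(1)])
      have "mdvd (s(n := 0)) g"
        unfolding mdvd_def
      proof
        fix i show "(s(n := 0)) i \<le> g i"
        proof (cases "i = n")
          case False
          then have "s i \<le> a0 i" using s(2) by (simp add: mdvd_def)
          then show ?thesis using False by (simp add: a0_def var_def)
        qed simp
      qed
      then have "s(n := 0) = g" using gmin2 h'I by blast
      then have "mdvd g s" unfolding mdvd_def by (metis fun_upd_apply le_refl zero_le)
      then show False using sI(2) by simp
    next
      case False
      then obtain j where j: "maxvar n g \<le> j" "j < n" "s = (\<lambda>k. g k + var j k)" using s(1) by (auto simp: G_def)
      have "s j \<le> a0 j" using s(2) by (simp add: mdvd_def)
      then show False using j by (simp add: a0_def var_def)
    qed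
  qed
  have uniq: "a = a0" if a: "a \<in> monomials n" "mdeg n a = d" "a \<in> I" "a \<notin> I'" for a
  proof -
    have inI': "b \<in> G \<Longrightarrow> mdvd b a \<Longrightarrow> False" for b
      using a unfolding I'_def mgen_def by blast
    have ga: "mdvd g a"
    proof (rule ccontr)
      assume "\<not> mdvd g a"
      then have "a \<in> G" using a(3) by (simp add: G_def)
      then show False using inI'[of a] by (simp add: mdvd_def)
    qed
    have eq: "a i = g i" if "i \<noteq> n" for i
    proof (rule ccontr)
      assume ne: "a i \<noteq> g i"
      then have gt: "g i < a i" using ga by (simp add: mdvd_def le_neq_implies_less)
      have "i \<le> n"
      proof (rule ccontr)
        assume "\<not> i \<le> n"
        then have "a i = 0" using a(1) by (simp add: monomials_def)
        then show False using gt by simp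
      qed
      then have iln: "i < n" using that by simp
      show False
      proof (cases "maxvar n g \<le> i")
        case True
        then have "(\<lambda>k. g k + var i k) \<in> G" using iln by (auto simp: G_def)
        moreover have "mdvd (\<lambda>k. g k + var i k) a" using ga gt by (auto simp: mdvd_def var_def Suc_le_eq)
        ultimately show False using inI' by blast
      next
        case False
        define m where "m = maxvar n g"
        have im: "i < m" using False m_def by simp
        have gmpos: "0 < g m" using maxvar_pos[of n g] im m_def by simp
        have mn: "m \<le> n" using maxvar_le m_def by simp
        define b where "b = (\<lambda>k. g k - var m k + var i k)"
        have bI: "b \<in> I" using bo gI mn im gmpos unfolding borel_def b_def by blast
        have "\<not> mdvd g b"
        proof
          assume "mdvd g b"
          then have "g m \<le> b m" by (simp add: mdvd_def)
          then show False using im gmpos by (simp add: b_def var_def)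
        qed
        then have "b \<in> G" using bI by (simp add: G_def)
        moreover have "mdvd b a"
          unfolding mdvd_def
        proof
          fix j show "b j \<le> a j"
            using ga gt im unfolding b_def var_def mdvd_def
            by (cases "j = i"; cases "j = m") (auto simp: Suc_le_eq le_diff_conv intro: le_trans)
        qed
        ultimately show False using inI' by blast
      qed
    qed
    have gna: "g n \<le> a n" using ga by (simp add: mdvd_def)
    have aform: "a = (\<lambda>i. g i + (a n - g n) * var n i)"
      using eq gna by (auto simp: fun_eq_iff var_def)
    have "mdeg n a = mdeg n g + (a n - g n)"
      using mdeg_add[of n g "\<lambda>i. (a n - g n) * var n i"] mdeg_var[of n n "a n - g n"] aform by simp
    then have "a n - g n = k" using a(2) k_def by simp
    then show ?thesis using aform a0_def by simp
  qed
  have fin: "finite {a \<in> Dg n d. a \<notin> I}" by (rule finite_compl)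
  have "{a \<in> Dg n d. a \<notin> I'} = insert a0 {a \<in> Dg n d. a \<notin> I}"
  proof (intro equalityI subsetI)
    fix a assume "a \<in> {a \<in> Dg n d. a \<notin> I'}"
    then show "a \<in> insert a0 {a \<in> Dg n d. a \<notin> I}" using uniq by (auto simp: Dg_def)
  next
    fix a assume "a \<in> insert a0 {a \<in> Dg n d. a \<notin> I}"
    then show "a \<in> {a \<in> Dg n d. a \<notin> I'}" using a0m a0d a0nI' I'I by (auto simp: Dg_def)
  qed
  moreover have "a0 \<notin> {a \<in> Dg n d. a \<notin> I}" using a0I by simp
  ultimately have "card {a \<in> Dg n d. a \<notin> I'} = card {a \<in> Dg n d. a \<notin> I} + 1"
    using fin by simp
  then show ?thesis unfolding I'def hf_Dg .
qed


theorem lemma5p5: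
  fixes n :: nat and I :: "(nat \<Rightarrow> nat) set" and g :: "nat \<Rightarrow> nat"
  assumes "monomial_ideal n I" and "borel n I" and "saturated n I"
    and "expandable n I g"
  shows "hilbert_poly n (expansion n I g) = 1 + hilbert_poly n I"
proof -
  have gmin: "g \<in> min_gens I" using assms(4) by (simp add: expandable_def)
  obtain p :: "rat poly" where p: "\<forall>\<^sub>F d in sequentially. poly p (of_nat d) = of_nat (hilbert_fun n I d)"
    using EP_ideal[OF assms(1)] by blast
  have hI: "hilbert_poly n I = p" by (rule hilbert_poly_eq[OF p])
  have "\<forall>\<^sub>F d in sequentially. d \<ge> mdeg n g" by (rule eventually_ge_at_top)
  with p have "\<forall>\<^sub>F d in sequentially. poly (p + 1) (of_nat d) = of_nat (hilbert_fun n (expansion n I g) d)"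
    by eventually_elim (simp add: main_count[OF assms(1-3) gmin])
  then have "hilbert_poly n (expansion n I g) = p + 1" by (rule hilbert_poly_eq)
  then show ?thesis using hI by (simp add: add.commute)
qed

end
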